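(* Let $f\in\mathcal U(1)$ with $\dfrac{z}{f(z)}=1+\sum_{n=1}^\infty b_nz^n$ in $\mathbb D$, and let $\theta\in[0,2\pi)$. Define $f_3,f_4$ by $$\frac{z}{f_3(z)}=1+\sum_{n=1}^\infty b_n\cos(n\theta)z^n,\qquad \frac{z}{f_4(z)}=1+\sum_{n=1}^\infty b_n\sin(n\theta)z^n.$$ If $z/f_3(z)\ne0$ in $\mathbb D$ then $f_3\in\mathcal U(1)$, and if $z/f_4(z)\ne0$ in $\mathbb D$ then $f_4\in\mathcal U(1)$.
   Context: $\mathbb D=\{z\in\mathbb C:|z|<1\}$. $\mathcal A$ is the class of functions $f$ analytic in $\mathbb D$ with $f(z)=z+\sum_{k\ge2}a_kz^k$. For $f\in\mathcal A$ with $f(z)\ne0$ for $z\in\mathbb D\setminus\{0\}$, set $U_f(z)=\left(\frac{z}{f(z)}\right)^2f'(z)-1$. $\mathcal U(1)$ is the class of such $f\in\mathcal A$ with $|U_f(z)|<1$ for all $z\in\mathbb D$. *)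

theory Defs
  imports "HOL-Complex_Analysis.Complex_Analysis"
begin

definition classA :: "(complex \<Rightarrow> complex) \<Rightarrow> bool" where
  "classA f \<longleftrightarrow> f holomorphic_on ball 0 1 \<and> f 0 = 0 \<and> deriv f 0 = 1"

text \<open>U_f(z) = (z/f(z))^2 f'(z) - 1, meaningful for z nonzero (at z = 0 its
  value is 0 by continuity, so the condition there is automatic).\<close>
definition Ufun :: "(complex \<Rightarrow> complex) \<Rightarrow> complex \<Rightarrow> complex" where
  "Ufun f z = (z / f z)^2 * deriv f z - 1"

definition classU1 :: "(complex \<Rightarrow> complex) \<Rightarrow> bool" where
  "classU1 f \<longleftrightarrow> classA f \<and> (\<forall>z\<in>ball 0 1 - {0}. f z \<noteq> 0)
     \<and> (\<forall>z\<in>ball 0 1 - {0}. norm (Ufun f z) < 1)"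

definition modseries :: "(nat \<Rightarrow> complex) \<Rightarrow> (nat \<Rightarrow> real) \<Rightarrow> complex \<Rightarrow> complex" where
  "modseries b c z = 1 + (\<Sum>n. b (Suc n) * complex_of_real (c (Suc n)) * z ^ Suc n)"

end

theory Submission
  imports Defs
begin

lemma L1:
  assumes G: "G holomorphic_on ball 0 1" and nz: "\<forall>z\<in>ball 0 1. G z \<noteq> 0" and G0: "G 0 = 1"
    and Q: "\<forall>z\<in>ball 0 1 - {0}. norm (G z - z * deriv G z - 1) < 1"
    and MG: "\<forall>z\<in>ball 0 1. M z = G z"
  shows "classU1 (\<lambda>z. z / M z)"
proof -
  have D: "((\<lambda>z. z / M z) has_field_derivative (G z - z * deriv G z) / (G z * G z)) (at z)"
    if z: "z \<in> ball 0 1" for z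
  proof -
    have dG: "(G has_field_derivative deriv G z) (at z)"
      using G z by (meson holomorphic_derivI open_ball)
    have "((\<lambda>z. z / G z) has_field_derivative (1 * G z - z * deriv G z) / (G z * G z)) (at z)"
      by (rule DERIV_divide[OF DERIV_ident dG]) (use nz z in auto)
    then have "((\<lambda>z. z / G z) has_field_derivative (G z - z * deriv G z) / (G z * G z)) (at z)"
      by simp
    then show ?thesis
      by (rule has_field_derivative_transform_within_open[where S="ball 0 1"]) (use z MG in auto)
  qed
  have hol: "(\<lambda>z. z / M z) holomorphic_on ball 0 1"
  proof -
    have "(\<lambda>z. z / G z) holomorphic_on ball 0 1"
      using G nz by (intro holomorphic_intros) auto
    then show ?thesis by (rule holomorphic_transform) (use MG in auto)
  qed
  have d0: "deriv (\<lambda>z. z / M z) 0 = 1"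
    using DERIV_imp_deriv[OF D[of 0]] G0 by simp
  have U: "Ufun (\<lambda>z. z / M z) z = G z - z * deriv G z - 1" if z: "z \<in> ball 0 1 - {0}" for z
  proof -
    have "deriv (\<lambda>z. z / M z) z = (G z - z * deriv G z) / (G z * G z)"
      using DERIV_imp_deriv[OF D[of z]] z by simp
    moreover have "G z \<noteq> 0" "z \<noteq> 0" using nz z by auto
    ultimately show ?thesis using z MG unfolding Ufun_def by (simp add: field_simps power2_eq_square)
  qed
  show ?thesis unfolding classU1_def classA_def
    using hol d0 U Q MG nz G0 by auto
qed

lemma avg1: "norm (u::complex) < 1 \<Longrightarrow> norm v < 1 \<Longrightarrow> norm ((u + v) / 2) < 1"
proof -
  assume a: "norm u < 1" "norm v < 1"
  have h: "norm ((u + v) / 2) \<le> (norm u + norm v) / 2"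
    by (simp add: norm_divide norm_triangle_ineq)
  show ?thesis by (rule le_less_trans[OF h]) (use a in argo)
qed

lemma avg2: "norm (u::complex) < 1 \<Longrightarrow> norm v < 1 \<Longrightarrow> norm ((u - v) / (2 * \<i>)) < 1"
proof -
  assume a: "norm u < 1" "norm v < 1"
  have h: "norm ((u - v) / (2 * \<i>)) \<le> (norm u + norm v) / 2"
    by (simp add: norm_divide norm_mult norm_triangle_ineq4)
  show ?thesis by (rule le_less_trans[OF h]) (use a in argo)
qed

lemma cis_sum: "cis a + cis (- a) = 2 * complex_of_real (cos a)"
  by (simp add: complex_eq_iff)

lemma cis_diff: "cis a - cis (- a) = 2 * \<i> * complex_of_real (sin a)"
  by (simp add: complex_eq_iff)

lemma tc: "(c * (cis t * z)^k + c * (cis (-t) * z)^k)/2 = c * complex_of_real (cos (real k * t)) * z^k"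
proof -
  have "cis t ^ k + cis (-t) ^ k = 2 * complex_of_real (cos (real k * t))"
    unfolding Complex.DeMoivre by (simp add: complex_eq_iff)
  have "(c * (cis t * z)^k + c * (cis (-t) * z)^k)/2 = c * z^k * ((cis t ^ k + cis (-t) ^ k) / 2)"
    by (simp add: power_mult_distrib field_simps)
  also have "\<dots> = c * complex_of_real (cos (real k * t)) * z^k"
    using \<open>cis t ^ k + cis (-t) ^ k = _\<close> by simp
  finally show ?thesis .
qed

lemma ts: "(c * (cis t * z)^k - c * (cis (-t) * z)^k)/(2 * \<i>) = c * complex_of_real (sin (real k * t)) * z^k"
proof -
  have e: "cis t ^ k - cis (-t) ^ k = 2 * \<i> * complex_of_real (sin (real k * t))"
    unfolding Complex.DeMoivre by (simp add: complex_eq_iff)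
  have "(c * (cis t * z)^k - c * (cis (-t) * z)^k)/(2 * \<i>) = c * z^k * ((cis t ^ k - cis (-t) ^ k) / (2 * \<i>))"
    by (simp add: power_mult_distrib field_simps)
  also have "\<dots> = c * complex_of_real (sin (real k * t)) * z^k"
    using e by simp
  finally show ?thesis .
qed

theorem mainTheorem12:
  fixes f :: "complex \<Rightarrow> complex" and b :: "nat \<Rightarrow> complex" and \<theta> :: real
  assumes "classU1 f"
    and "\<forall>z\<in>ball 0 1 - {0}. (\<lambda>n. b (Suc n) * z ^ Suc n) sums (z / f z - 1)"
    and "0 \<le> \<theta>" and "\<theta> < 2 * pi"
  shows "((\<forall>z\<in>ball 0 1. modseries b (\<lambda>n. cos (real n * \<theta>)) z \<noteq> 0) \<longrightarrow>
            classU1 (\<lambda>z. z / modseries b (\<lambda>n. cos (real n * \<theta>)) z))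
       \<and> ((\<forall>z\<in>ball 0 1. modseries b (\<lambda>n. sin (real n * \<theta>)) z \<noteq> 0) \<longrightarrow>
            classU1 (\<lambda>z. z / modseries b (\<lambda>n. sin (real n * \<theta>)) z))"
proof -
  note U = assms(1)[unfolded classU1_def]
  define a where "a = (\<lambda>n. if n = 0 then 1 else b n)"
  define A where "A = Abs_fps a"
  define P where "P = eval_fps A"
  define S where "S = (\<lambda>w. \<Sum>n. b (Suc n) * w ^ Suc n)"
  have summS: "summable (\<lambda>n. b (Suc n) * w ^ Suc n)" if w: "w \<in> ball 0 1" for w
  proof (cases "w = 0")
    case True then show ?thesis by simp
  next
    case False then show ?thesis using assms(2) w sums_summable by blast
  qed
  have suma: "summable (\<lambda>n. a n * w ^ n)" if w: "w \<in> ball 0 1" for w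
    using summS[OF w] summable_Suc_iff[of "\<lambda>n. a n * w ^ n"] by (simp add: a_def)
  have conv: "fps_conv_radius A \<ge> 1"
    unfolding fps_conv_radius_def A_def fps_nth_Abs_fps
  proof (rule conv_radius_geI_ex')
    fix r :: real assume "0 < r" "ereal r < 1"
    then show "summable (\<lambda>n. a n * (of_real r :: complex) ^ n)" by (intro suma) auto
  qed
  have hol: "P holomorphic_on ball 0 1"
    unfolding P_def
  proof (rule holomorphic_on_eval_fps)
    show "ball (0::complex) 1 \<subseteq> eball 0 (fps_conv_radius A)"
    proof (rule subsetI)
      fix z :: complex assume "z \<in> ball 0 1"
      then have "ereal (norm z) < 1" by simp
      then have "ereal (norm z) < fps_conv_radius A" using conv by (meson order.strict_trans2)
      then show "z \<in> eball 0 (fps_conv_radius A)" by simp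
    qed
  qed
  have PS: "P w = 1 + S w" if w: "w \<in> ball 0 1" for w
  proof -
    have "P w = (\<Sum>n. a n * w ^ n)" by (simp add: P_def A_def eval_fps_def)
    moreover have "(\<Sum>n. a (Suc n) * w ^ Suc n) = (\<Sum>n. a n * w ^ n) - a 0 * w ^ 0"
      by (rule suminf_split_head[OF suma[OF w]])
    ultimately show ?thesis by (simp add: a_def S_def)
  qed
  have Pf: "P w = w / f w" if w: "w \<in> ball 0 1 - {0}" for w
  proof -
    have "(\<lambda>n. b (Suc n) * w ^ Suc n) sums (w / f w - 1)" using assms(2) w by blast
    then have "S w = w / f w - 1" by (simp add: S_def sums_iff)
    then show ?thesis using PS[of w] w by simp
  qed
  have P0: "P 0 = 1" by (simp add: P_def A_def eval_fps_at_0 a_def)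
  have Pnz: "P w \<noteq> 0" if w: "w \<in> ball 0 1" for w
  proof (cases "w = 0")
    case True then show ?thesis using P0 by simp
  next
    case False then show ?thesis using Pf[of w] w U by auto
  qed
  have dP: "(P has_field_derivative deriv P w) (at w)" if "w \<in> ball 0 1" for w
    using hol that by (meson holomorphic_derivI open_ball)
  have Qb: "norm (P w - w * deriv P w - 1) < 1" if w: "w \<in> ball 0 1 - {0}" for w
  proof -
    have "((\<lambda>w. w / P w) has_field_derivative (1 * P w - w * deriv P w) / (P w * P w)) (at w)"
      by (rule DERIV_divide[OF DERIV_ident dP]) (use w Pnz in auto)
    then have "(f has_field_derivative (1 * P w - w * deriv P w) / (P w * P w)) (at w)"
    proof (rule has_field_derivative_transform_within_open[where S="ball 0 1 - {0}"])
      fix x :: complex assume x: "x \<in> ball 0 1 - {0}"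
      then have "f x \<noteq> 0" using U by auto
      then show "x / P x = f x" using Pf[OF x] x by simp
    qed (use w in auto)
    then have "deriv f w = (P w - w * deriv P w) / (P w * P w)"
      using DERIV_imp_deriv by fastforce
    moreover have "w / f w = P w" using Pf w by simp
    moreover have "P w \<noteq> 0" using Pnz w by simp
    ultimately have e: "Ufun f w = P w - w * deriv P w - 1"
      unfolding Ufun_def by (simp add: field_simps power2_eq_square)
    have "norm (Ufun f w) < 1" using U w by blast
    then show ?thesis unfolding e .
  qed
  have inb: "c * z \<in> ball 0 1" if "norm c = 1" "z \<in> ball 0 1" for c z :: complex
    using that by (simp add: norm_mult)
  have inb0: "c * z \<in> ball 0 1 - {0}" if "norm c = 1" "z \<in> ball 0 1 - {0}" for c z :: complex
    using that by (auto simp: norm_mult)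
  have dPc: "((\<lambda>z. P (c * z)) has_field_derivative deriv P (c * z) * c) (at z)"
    if "norm c = 1" "z \<in> ball 0 1" for c z :: complex
  proof -
    have "((\<lambda>z. c * z) has_field_derivative c * 1) (at z)"
      by (rule DERIV_cmult[OF DERIV_ident])
    then show ?thesis using DERIV_chain2[where f=P and g="\<lambda>z. c * z" and x=z and s=UNIV, OF dP[OF inb[OF that]]] by simp
  qed
  have holc: "(\<lambda>z. P (c * z)) holomorphic_on ball 0 1" if "norm c = 1" for c :: complex
  proof -
    have "((\<lambda>z. c * z) holomorphic_on ball 0 1)" by (intro holomorphic_intros)
    moreover have "(\<lambda>z. c * z) ` ball 0 1 \<subseteq> ball 0 1" using inb[OF that] by auto
    ultimately show ?thesis using holomorphic_on_compose_gen[OF _ hol] by (simp add: o_def)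
  qed
  define \<alpha> where "\<alpha> = cis \<theta>"
  define \<beta> where "\<beta> = cis (- \<theta>)"
  have n\<alpha>: "norm \<alpha> = 1" and n\<beta>: "norm \<beta> = 1" by (simp_all add: \<alpha>_def \<beta>_def)
  have sS: "(\<lambda>n. b (Suc n) * (c * z) ^ Suc n) sums S (c * z)" if "norm c = 1" "z \<in> ball 0 1" for c z :: complex
    unfolding S_def using summS[OF inb[OF that]] by (rule summable_sums)
  show ?thesis
  proof (intro conjI impI)
    assume nzm: "\<forall>z\<in>ball 0 1. modseries b (\<lambda>n. cos (real n * \<theta>)) z \<noteq> 0"
    define G where "G = (\<lambda>z. (P (\<alpha> * z) + P (\<beta> * z)) / 2)"
    have MG: "\<forall>z\<in>ball 0 1. modseries b (\<lambda>n. cos (real n * \<theta>)) z = G z"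
    proof
      fix z :: complex assume z: "z \<in> ball 0 1"
      have "(\<lambda>n. (b (Suc n) * (\<alpha> * z) ^ Suc n + b (Suc n) * (\<beta> * z) ^ Suc n) / 2) sums
              ((S (\<alpha> * z) + S (\<beta> * z)) / 2)"
        by (intro sums_divide sums_add sS n\<alpha> n\<beta> z)
      then have "(\<lambda>n. b (Suc n) * complex_of_real (cos (real (Suc n) * \<theta>)) * z ^ Suc n) sums
              ((S (\<alpha> * z) + S (\<beta> * z)) / 2)"
        unfolding \<alpha>_def \<beta>_def tc .
      then show "modseries b (\<lambda>n. cos (real n * \<theta>)) z = G z"
        unfolding modseries_def G_def using PS[OF inb[OF n\<alpha> z]] PS[OF inb[OF n\<beta> z]]
        by (simp add: sums_iff field_simps)
    qed
    show "classU1 (\<lambda>z. z / modseries b (\<lambda>n. cos (real n * \<theta>)) z)"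
    proof (rule L1[OF _ _ _ _ MG])
      show "G holomorphic_on ball 0 1" unfolding G_def
        using holc[OF n\<alpha>] holc[OF n\<beta>] by (intro holomorphic_intros) auto
      show "\<forall>z\<in>ball 0 1. G z \<noteq> 0" using MG nzm by auto
      show "G 0 = 1" using P0 by (simp add: G_def)
      show "\<forall>z\<in>ball 0 1 - {0}. norm (G z - z * deriv G z - 1) < 1"
      proof
        fix z :: complex assume z: "z \<in> ball 0 1 - {0}"
        have "(G has_field_derivative (deriv P (\<alpha> * z) * \<alpha> + deriv P (\<beta> * z) * \<beta>) / 2) (at z)"
          unfolding G_def using z by (intro DERIV_cdivide DERIV_add dPc n\<alpha> n\<beta>) auto
        then have "deriv G z = (deriv P (\<alpha> * z) * \<alpha> + deriv P (\<beta> * z) * \<beta>) / 2"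
          by (rule DERIV_imp_deriv)
        then have "G z - z * deriv G z - 1 =
           ((P (\<alpha> * z) - (\<alpha> * z) * deriv P (\<alpha> * z) - 1) + (P (\<beta> * z) - (\<beta> * z) * deriv P (\<beta> * z) - 1)) / 2"
          unfolding G_def by (simp add: field_simps)
        then show "norm (G z - z * deriv G z - 1) < 1"
          using avg1[OF Qb[OF inb0[OF n\<alpha> z]] Qb[OF inb0[OF n\<beta> z]]] by (simp only:)
      qed
    qed
  next
    assume nzm: "\<forall>z\<in>ball 0 1. modseries b (\<lambda>n. sin (real n * \<theta>)) z \<noteq> 0"
    define G where "G = (\<lambda>z. 1 + (P (\<alpha> * z) - P (\<beta> * z)) / (2 * \<i>))"
    have MG: "\<forall>z\<in>ball 0 1. modseries b (\<lambda>n. sin (real n * \<theta>)) z = G z"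
    proof
      fix z :: complex assume z: "z \<in> ball 0 1"
      have "(\<lambda>n. (b (Suc n) * (\<alpha> * z) ^ Suc n - b (Suc n) * (\<beta> * z) ^ Suc n) / (2 * \<i>)) sums
              ((S (\<alpha> * z) - S (\<beta> * z)) / (2 * \<i>))"
        by (intro sums_divide sums_diff sS n\<alpha> n\<beta> z)
      then have "(\<lambda>n. b (Suc n) * complex_of_real (sin (real (Suc n) * \<theta>)) * z ^ Suc n) sums
              ((S (\<alpha> * z) - S (\<beta> * z)) / (2 * \<i>))"
        unfolding \<alpha>_def \<beta>_def ts .
      then show "modseries b (\<lambda>n. sin (real n * \<theta>)) z = G z"
        unfolding modseries_def G_def using PS[OF inb[OF n\<alpha> z]] PS[OF inb[OF n\<beta> z]]
        by (simp add: sums_iff)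
    qed
    show "classU1 (\<lambda>z. z / modseries b (\<lambda>n. sin (real n * \<theta>)) z)"
    proof (rule L1[OF _ _ _ _ MG])
      show "G holomorphic_on ball 0 1" unfolding G_def
        using holc[OF n\<alpha>] holc[OF n\<beta>] by (intro holomorphic_intros) auto
      show "\<forall>z\<in>ball 0 1. G z \<noteq> 0" using MG nzm by auto
      show "G 0 = 1" using P0 by (simp add: G_def)
      show "\<forall>z\<in>ball 0 1 - {0}. norm (G z - z * deriv G z - 1) < 1"
      proof
        fix z :: complex assume z: "z \<in> ball 0 1 - {0}"
        have "(G has_field_derivative 0 + (deriv P (\<alpha> * z) * \<alpha> - deriv P (\<beta> * z) * \<beta>) / (2 * \<i>)) (at z)"
          unfolding G_def using z by (intro DERIV_cdivide DERIV_add DERIV_diff DERIV_const dPc n\<alpha> n\<beta>) auto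
        then have "deriv G z = (deriv P (\<alpha> * z) * \<alpha> - deriv P (\<beta> * z) * \<beta>) / (2 * \<i>)"
          by (simp add: DERIV_imp_deriv)
        note e = this
        have "G z - z * deriv G z - 1 =
           ((P (\<alpha> * z) - (\<alpha> * z) * deriv P (\<alpha> * z) - 1) - (P (\<beta> * z) - (\<beta> * z) * deriv P (\<beta> * z) - 1)) / (2 * \<i>)"
          unfolding e by (simp add: G_def field_simps)
        then show "norm (G z - z * deriv G z - 1) < 1"
          using avg2[OF Qb[OF inb0[OF n\<alpha> z]] Qb[OF inb0[OF n\<beta> z]]] by (simp only:)
      qed
    qed
  qed
qed

end
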